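(* Let $\gamma:[t_0,t_1]\to\mathcal V_{n+1}$ be an ordinary admissible evolution, with lift $\hat\gamma:t\mapsto(q^i(t),z^A(t))$ to $\mathcal A$, which is an extremal of the action functional $\mathcal I[\gamma]=\int_{t_0}^{t_1}\mathscr L(t,q(t),z(t))\,dt$ among admissible evolutions with the same end-points. Then there exist functions $p_i(t)$ on $[t_0,t_1]$ such that the curve $\tilde\gamma:t\mapsto(q^i(t),z^A(t),p_i(t))$ in $\mathscr C(\mathcal A)$ is an extremal of the functional $\mathcal I[\tilde\gamma]=\int_{t_0}^{t_1}\big(p_i\,\tfrac{dq^i}{dt}-\mathscr H\big)dt$, $\mathscr H=p_i\psi^i-\mathscr L$, with respect to arbitrary deformations keeping $q^i(t_0),q^i(t_1)$ fixed; equivalently, along $\tilde\gamma$ $$\frac{dp_i}{dt}+p_k\frac{\partial\psi^k}{\partial q^i}=\frac{\partial\mathscr L}{\partial q^i},\qquad p_k\frac{\partial\psi^k}{\partial z^A}=\frac{\partial\mathscr L}{\partial z^A}.$$ In particular $\gamma$ is the projection of at least one such extremal $\tilde\gamma$.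
   Context: $\mathcal V_{n+1}\to\mathbb R$ is a fibre bundle with local fibred coordinates $t,q^1,\dots,q^n$; $\mathcal A\subset j_1(\mathcal V_{n+1})$ is a submanifold fibred over $\mathcal V_{n+1}$ with coordinates $t,q^i,z^A$ ($A=1,\dots,r$), embedded via $\dot q^i=\psi^i(t,q,z)$ with $\operatorname{rank}\|\partial\psi^i/\partial z^A\|=r$; $\mathscr L\in C^\infty(\mathcal A)$. $\mathscr C(\mathcal A)$ is the affine bundle over $\mathcal A$ with local coordinates $t,q^i,z^A,p_i$ (the $p_i$ being fibre coordinates modelled on the pull-back of $V^*(\mathcal V_{n+1})$). An evolution $\gamma:t\mapsto q^i(t)$ is admissible iff it has a lift $\hat\gamma:t\mapsto(q^i(t),z^A(t))$ with $dq^i/dt=\psi^i(t,q,z)$; an admissible deformation is a smooth one-parameter family of admissible evolutions $\gamma_\xi$, $\gamma_0=\gamma$. An admissible infinitesimal deformation of $\hat\gamma$ is a field $X^i\partial/\partial q^i+\Gamma^A\partial/\partial z^A$ along $\hat\gamma$ satisfying $\dot X^i=(\partial\psi^i/\partial q^k)X^k+(\partial\psi^i/\partial z^A)\Gamma^A$. The admissible evolution $\gamma$ is called ordinary iff every admissible infinitesimal deformation with $X^i(t_0)=X^i(t_1)=0$ is tangent (at $\xi=0$) to an admissible deformation $\gamma_\xi$ with fixed end-points. Extremal of $\mathcal I[\gamma]$ means $\frac{d}{d\xi}\mathcal I[\gamma_\xi]|_{\xi=0}=0$ for every admissible deformation with fixed end-points. All curves are differentiable and lie in one coordinate chart. *)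

theory Defs
  imports "HOL-Analysis.Analysis"
begin

text \<open>Points of the (single) chart of the constraint submanifold A have coordinates (t, q, z)
  with q in R^n (index type 'n) and z in R^r (index type 'r).\<close>

definition Cinf_on :: "'a::euclidean_space set \<Rightarrow> ('a \<Rightarrow> real) \<Rightarrow> bool" where
  "Cinf_on U f \<longleftrightarrow>
     (\<exists>F. f \<in> F \<and>
          (\<forall>g\<in>F. continuous_on U g \<and> (\<forall>x\<in>U. g differentiable (at x)) \<and>
                 (\<forall>i\<in>Basis. (\<lambda>x. frechet_derivative g (at x) i) \<in> F)))"

definition pdq :: "(real \<times> (real^'n::finite) \<times> (real^'r::finite) \<Rightarrow> real) \<Rightarrow> real \<times> (real^'n::finite) \<times> (real^'r::finite) \<Rightarrow> 'n \<Rightarrow> real" where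
  "pdq g w k = frechet_derivative g (at w) (0, axis k 1, 0)"

definition pdz :: "(real \<times> (real^'n::finite) \<times> (real^'r::finite) \<Rightarrow> real) \<Rightarrow> real \<times> (real^'n::finite) \<times> (real^'r::finite) \<Rightarrow> 'r \<Rightarrow> real" where
  "pdz g w A = frechet_derivative g (at w) (0, 0, axis A 1)"

definition admissible_lift ::
  "(real \<times> (real^'n::finite) \<times> (real^'r::finite)) set \<Rightarrow> (real \<times> (real^'n::finite) \<times> (real^'r::finite) \<Rightarrow> real^'n) \<Rightarrow> real \<Rightarrow> real
    \<Rightarrow> (real \<Rightarrow> real^'n) \<Rightarrow> (real \<Rightarrow> real^'r) \<Rightarrow> bool" where
  "admissible_lift U \<psi> t0 t1 q z \<longleftrightarrow>
     (\<forall>t\<in>{t0..t1}. (t, q t, z t) \<in> U \<and>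
        (q has_vector_derivative \<psi> (t, q t, z t)) (at t within {t0..t1}) \<and>
        z differentiable (at t within {t0..t1}))"

definition C1_family :: "('a::real_normed_vector) set \<Rightarrow> ('a \<Rightarrow> 'b::real_normed_vector) \<Rightarrow> bool" where
  "C1_family S F \<longleftrightarrow>
     (\<exists>F'. (\<forall>w\<in>S. (F has_derivative F' w) (at w within S)) \<and>
           (\<forall>h. continuous_on S (\<lambda>w. F' w h)))"

definition adm_deformation ::
  "(real \<times> (real^'n::finite) \<times> (real^'r::finite)) set \<Rightarrow> (real \<times> (real^'n::finite) \<times> (real^'r::finite) \<Rightarrow> real^'n) \<Rightarrow> real \<Rightarrow> real
    \<Rightarrow> (real \<Rightarrow> real^'n) \<Rightarrow> (real \<Rightarrow> real^'r)
    \<Rightarrow> (real \<Rightarrow> real \<Rightarrow> real^'n) \<Rightarrow> (real \<Rightarrow> real \<Rightarrow> real^'r) \<Rightarrow> bool" where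
  "adm_deformation U \<psi> t0 t1 q z Q Z \<longleftrightarrow>
     (\<exists>\<epsilon>>0.
        (\<forall>\<xi>\<in>{-\<epsilon><..<\<epsilon>}. admissible_lift U \<psi> t0 t1 (Q \<xi>) (Z \<xi>) \<and>
                          Q \<xi> t0 = q t0 \<and> Q \<xi> t1 = q t1) \<and>
        (\<forall>t\<in>{t0..t1}. Q 0 t = q t \<and> Z 0 t = z t) \<and>
        C1_family ({-\<epsilon><..<\<epsilon>} \<times> {t0..t1}) (\<lambda>(\<xi>, t). (Q \<xi> t, Z \<xi> t)))"

definition adm_inf_deformation ::
  "(real \<times> (real^'n::finite) \<times> (real^'r::finite) \<Rightarrow> real^'n) \<Rightarrow> real \<Rightarrow> real
    \<Rightarrow> (real \<Rightarrow> real^'n) \<Rightarrow> (real \<Rightarrow> real^'r)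
    \<Rightarrow> (real \<Rightarrow> real^'n) \<Rightarrow> (real \<Rightarrow> real^'r) \<Rightarrow> bool" where
  "adm_inf_deformation \<psi> t0 t1 q z X G \<longleftrightarrow>
     (\<forall>t\<in>{t0..t1}.
        (X has_vector_derivative
           (\<chi> i. (\<Sum>k\<in>UNIV. pdq (\<lambda>w. \<psi> w $ i) (t, q t, z t) k * X t $ k) +
                 (\<Sum>A\<in>UNIV. pdz (\<lambda>w. \<psi> w $ i) (t, q t, z t) A * G t $ A)))
          (at t within {t0..t1}) \<and>
        G differentiable (at t within {t0..t1}))"

definition ordinary ::
  "(real \<times> (real^'n::finite) \<times> (real^'r::finite)) set \<Rightarrow> (real \<times> (real^'n::finite) \<times> (real^'r::finite) \<Rightarrow> real^'n) \<Rightarrow> real \<Rightarrow> real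
    \<Rightarrow> (real \<Rightarrow> real^'n) \<Rightarrow> (real \<Rightarrow> real^'r) \<Rightarrow> bool" where
  "ordinary U \<psi> t0 t1 q z \<longleftrightarrow>
     (\<forall>X G. adm_inf_deformation \<psi> t0 t1 q z X G \<and> X t0 = 0 \<and> X t1 = 0 \<longrightarrow>
        (\<exists>Q Z. adm_deformation U \<psi> t0 t1 q z Q Z \<and>
           (\<forall>t\<in>{t0..t1}. ((\<lambda>\<xi>. Q \<xi> t) has_vector_derivative X t) (at 0) \<and>
                          ((\<lambda>\<xi>. Z \<xi> t) has_vector_derivative G t) (at 0))))"

definition extremal ::
  "(real \<times> (real^'n::finite) \<times> (real^'r::finite)) set \<Rightarrow> (real \<times> (real^'n::finite) \<times> (real^'r::finite) \<Rightarrow> real^'n)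
    \<Rightarrow> (real \<times> (real^'n::finite) \<times> (real^'r::finite) \<Rightarrow> real) \<Rightarrow> real \<Rightarrow> real
    \<Rightarrow> (real \<Rightarrow> real^'n) \<Rightarrow> (real \<Rightarrow> real^'r) \<Rightarrow> bool" where
  "extremal U \<psi> L t0 t1 q z \<longleftrightarrow>
     (\<forall>Q Z. adm_deformation U \<psi> t0 t1 q z Q Z \<longrightarrow>
        ((\<lambda>\<xi>. integral {t0..t1} (\<lambda>t. L (t, Q \<xi> t, Z \<xi> t))) has_real_derivative 0) (at 0))"

end

theory Submission
  imports Defs
begin


lemma picard_exists:
  fixes f :: "real \<Rightarrow> 'a::banach \<Rightarrow> 'a"
  assumes ab: "a \<le> b"
    and contf: "\<And>g. continuous_on {a..b} g \<Longrightarrow> continuous_on {a..b} (\<lambda>t. f t (g t))"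
    and lip: "\<And>t x y. t \<in> {a..b} \<Longrightarrow> norm (f t x - f t y) \<le> K * norm (x - y)"
    and K: "K > 0"
  shows "\<exists>x. x a = x0 \<and> (\<forall>t\<in>{a..b}. (x has_vector_derivative f t (x t)) (at t within {a..b}))"
proof -
  define P where "P = rec_nat (\<lambda>t. x0) (\<lambda>k Pk. \<lambda>t. x0 + integral {a..t} (\<lambda>s. f s (Pk s)))"
  have P0: "P 0 = (\<lambda>t. x0)" by (simp add: P_def)
  have PS: "P (Suc k) = (\<lambda>t. x0 + integral {a..t} (\<lambda>s. f s (P k s)))" for k by (simp add: P_def)
  have intsub: "g integrable_on {a..t}" if "continuous_on {a..b} g" "t \<in> {a..b}" for g :: "real \<Rightarrow> 'a" and t
    using that by (intro integrable_continuous_interval) (auto elim!: continuous_on_subset)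
  have intsubr: "g integrable_on {a..t}" if "continuous_on {a..b} g" "t \<in> {a..b}" for g :: "real \<Rightarrow> real" and t
    using that by (intro integrable_continuous_interval) (auto elim!: continuous_on_subset)
  have cont: "continuous_on {a..b} (P k)" for k
  proof (induction k)
    case 0 then show ?case by (simp add: P0)
  next
    case (Suc k)
    have "continuous_on {a..b} (\<lambda>t. integral {a..t} (\<lambda>s. f s (P k s)))"
      by (rule indefinite_integral_continuous_1, rule integrable_continuous_interval, rule contf, rule Suc)
    then show ?case unfolding PS by (intro continuous_intros)
  qed
  obtain C where C: "\<And>t. t \<in> {a..b} \<Longrightarrow> norm (f t x0) \<le> C" and C0: "C \<ge> 0"
  proof -
    have "compact ((\<lambda>t. f t x0) ` {a..b})"
      by (rule compact_continuous_image, rule contf[of "\<lambda>t. x0", simplified], simp)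
    then obtain B where "\<forall>y\<in>(\<lambda>t. f t x0) ` {a..b}. norm y \<le> B"
      using compact_imp_bounded bounded_iff by metis
    then show ?thesis using that[of "max B 0"] by force
  qed
  have cf0: "continuous_on {a..b} (\<lambda>t. f t x0)" using contf[of "\<lambda>t. x0"] by simp
  have bound: "\<forall>t\<in>{a..b}. norm (P (Suc k) t - P k t) \<le> C * K^k * (t-a)^(Suc k) / fact (Suc k)" for k
  proof (induction k)
    case 0
    show ?case
    proof
      fix t assume t: "t \<in> {a..b}"
      have "norm (P (Suc 0) t - P 0 t) = norm (integral {a..t} (\<lambda>s. f s x0))"
        by (simp add: PS P0)
      also have "\<dots> \<le> integral {a..t} (\<lambda>s. C)"
        by (rule integral_norm_bound_integral) (use t in \<open>auto intro!: intsub cf0 C\<close>)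
      also have "\<dots> = C * (t - a)" using t by simp
      finally show "norm (P (Suc 0) t - P 0 t) \<le> C * K^0 * (t-a)^(Suc 0) / fact (Suc 0)" by simp
    qed
  next
    case (Suc k)
    show ?case
    proof
      fix t assume t: "t \<in> {a..b}"
      define cc where "cc = C * K^(Suc k) / fact (Suc (Suc k))"
      define h where "h s = cc * (s-a)^(Suc (Suc k))" for s
      define h' where "h' s = K * (C * K^k * (s-a)^(Suc k) / fact (Suc k))" for s
      have hd: "(h has_vector_derivative h' s) (at s within {a..t})" for s
      proof -
        have "((\<lambda>s. (s-a)^(Suc (Suc k))) has_real_derivative (real (Suc (Suc k)) * (s-a)^(Suc k))) (at s within {a..t})"
        proof -
          have "((\<lambda>s. s - a) has_real_derivative 1) (at s within {a..t})" by (auto intro!: derivative_eq_intros)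
          from DERIV_power[OF this, where n="Suc (Suc k)"] show ?thesis by simp
        qed
        then have "(h has_real_derivative cc * (real (Suc (Suc k)) * (s-a)^(Suc k))) (at s within {a..t})"
          unfolding h_def by (rule DERIV_cmult)
        moreover have "cc * (real (Suc (Suc k)) * (s-a)^(Suc k)) = h' s"
          unfolding cc_def h'_def by (simp add: field_simps del: of_nat_Suc fact_Suc) (simp add: fact_Suc[of "Suc k"])
        ultimately show ?thesis by (simp add: has_real_derivative_iff_has_vector_derivative)
      qed
      have hint: "(h' has_integral (h t - h a)) {a..t}"
        by (rule fundamental_theorem_of_calculus) (use t hd in auto)
      have "P (Suc (Suc k)) t - P (Suc k) t = integral {a..t} (\<lambda>s. f s (P (Suc k) s)) - integral {a..t} (\<lambda>s. f s (P k s))"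
        by (simp add: PS)
      also have "\<dots> = integral {a..t} (\<lambda>s. f s (P (Suc k) s) - f s (P k s))"
        by (rule integral_diff[symmetric]) (use t in \<open>auto intro!: intsub contf cont\<close>)
      finally have "P (Suc (Suc k)) t - P (Suc k) t = integral {a..t} (\<lambda>s. f s (P (Suc k) s) - f s (P k s))" .
      then have "norm (P (Suc (Suc k)) t - P (Suc k) t) = norm (integral {a..t} (\<lambda>s. f s (P (Suc k) s) - f s (P k s)))"
        by simp
      also have "\<dots> \<le> integral {a..t} h'"
      proof (rule integral_norm_bound_integral)
        show "(\<lambda>s. f s (P (Suc k) s) - f s (P k s)) integrable_on {a..t}"
          using t by (intro integrable_diff intsub contf cont) auto
        show "h' integrable_on {a..t}" using hint by blast
        fix s assume s: "s \<in> {a..t}"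
        then have sab: "s \<in> {a..b}" using t by auto
        have "norm (f s (P (Suc k) s) - f s (P k s)) \<le> K * norm (P (Suc k) s - P k s)"
          by (rule lip[OF sab])
        also have "\<dots> \<le> h' s" unfolding h'_def
          using Suc sab K by (intro mult_left_mono) auto
        finally show "norm (f s (P (Suc k) s) - f s (P k s)) \<le> h' s" .
      qed
      also have "\<dots> = h t - h a" using hint by (rule integral_unique)
      also have "\<dots> = C * K^(Suc k) * (t-a)^(Suc (Suc k)) / fact (Suc (Suc k))"
        by (simp add: h_def cc_def)
      finally show "norm (P (Suc (Suc k)) t - P (Suc k) t) \<le> C * K^(Suc k) * (t-a)^(Suc (Suc k)) / fact (Suc (Suc k))" .
    qed
  qed
  define D where "D = b - a"
  define M where "M i = C * D * ((K*D)^i / fact i)" for i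
  have Mb: "norm (P (Suc i) t - P i t) \<le> M i" if t: "t \<in> {a..b}" for i t
  proof -
    have "norm (P (Suc i) t - P i t) \<le> C * K^i * (t-a)^(Suc i) / fact (Suc i)" using bound t by blast
    also have "\<dots> \<le> C * K^i * D^(Suc i) / fact (Suc i)"
    proof -
      have "(t-a)^(Suc i) \<le> D^(Suc i)" by (intro power_mono) (use t in \<open>auto simp: D_def\<close>)
      then have "C*K^i*(t-a)^Suc i \<le> C*K^i*D^Suc i" by (intro mult_left_mono) (use C0 K in auto)
      then show ?thesis by (intro divide_right_mono) auto
    qed
    also have "\<dots> \<le> C * K^i * D^(Suc i) / fact i"
    proof -
      have f: "fact i \<le> (fact (Suc i)::real)" by (rule fact_mono) simp
      have "0 \<le> C * K^i * D^(Suc i)" using C0 K ab by (simp add: D_def)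
      moreover have "0 < (fact (Suc i)::real) * fact i" by simp
      ultimately show ?thesis using divide_left_mono[OF f] by blast
    qed
    also have "\<dots> = M i" by (simp add: M_def power_mult_distrib)
    finally show ?thesis .
  qed
  have sM: "summable M"
  proof -
    have "summable (\<lambda>i. inverse (fact i) * (K*D)^i)" by (rule summable_exp)
    then have "summable (\<lambda>i. (C*D) * (inverse (fact i) * (K*D)^i))" by (rule summable_mult)
    moreover have "M = (\<lambda>i. (C*D) * (inverse (fact i) * (K*D)^i))"
      by (rule ext) (simp add: M_def field_simps)
    ultimately show ?thesis by simp
  qed
  have ul0: "uniform_limit {a..b} (\<lambda>n t. \<Sum>i<n. (P (Suc i) t - P i t)) (\<lambda>t. suminf (\<lambda>i. P (Suc i) t - P i t)) sequentially"
    by (rule Weierstrass_m_test[OF Mb sM])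
  define xl where "xl t = x0 + suminf (\<lambda>i. P (Suc i) t - P i t)" for t
  have tel: "(\<Sum>i<n. (P (Suc i) t - P i t)) = P n t - x0" for n t
    using sum_lessThan_telescope[of "\<lambda>i. P i t" n] by (simp add: P0)
  have ul: "uniform_limit {a..b} P xl sequentially"
    using ul0 unfolding uniform_limit_iff tel xl_def
    by (simp add: dist_norm algebra_simps)
  have contxl: "continuous_on {a..b} xl"
    by (rule uniform_limit_theorem[OF _ ul]) (auto simp: cont)
  have ulf: "uniform_limit {a..b} (\<lambda>n s. f s (P n s)) (\<lambda>s. f s (xl s)) sequentially"
    unfolding uniform_limit_iff
  proof (intro allI impI)
    fix e :: real assume e: "e > 0"
    have "\<forall>\<^sub>F n in sequentially. \<forall>x\<in>{a..b}. dist (P n x) (xl x) < e / K"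
      using ul e K unfolding uniform_limit_iff by auto
    then show "\<forall>\<^sub>F n in sequentially. \<forall>x\<in>{a..b}. dist (f x (P n x)) (f x (xl x)) < e"
    proof (rule eventually_mono, intro ballI)
      fix n x assume h: "\<forall>x\<in>{a..b}. dist (P n x) (xl x) < e / K" and x: "x \<in> {a..b}"
      have "dist (f x (P n x)) (f x (xl x)) \<le> K * dist (P n x) (xl x)"
        using lip[OF x] by (simp add: dist_norm)
      also have "\<dots> < K * (e / K)" using h x K by (intro mult_strict_left_mono) auto
      finally show "dist (f x (P n x)) (f x (xl x)) < e" using K by simp
    qed
  qed
  have xleq: "xl t = x0 + integral {a..t} (\<lambda>s. f s (xl s))" if t: "t \<in> {a..b}" for t
  proof -
    have ult: "uniform_limit {a..t} (\<lambda>n s. f s (P n s)) (\<lambda>s. f s (xl s)) sequentially"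
      by (rule uniform_limit_on_subset[OF ulf]) (use t in auto)
    obtain I J where I: "\<And>n. ((\<lambda>s. f s (P n s)) has_integral I n) {a..t}"
      and J: "((\<lambda>s. f s (xl s)) has_integral J) {a..t}" and IJ: "I \<longlonglongrightarrow> J"
    proof (rule uniform_limit_integral[OF ult])
      show "continuous_on {a..t} (\<lambda>s. f s (P n s))" for n
        by (rule continuous_on_subset[OF contf[OF cont]]) (use t in auto)
    qed auto
    have "(\<lambda>n. P (Suc n) t) \<longlonglongrightarrow> x0 + J"
    proof -
      have "integral {a..t} (\<lambda>s. f s (P n s)) = I n" for n using I integral_unique by blast
      then show ?thesis unfolding PS using tendsto_add[OF tendsto_const IJ, of x0] by simp
    qed
    moreover have "(\<lambda>n. P (Suc n) t) \<longlonglongrightarrow> xl t"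
      using tendsto_uniform_limitI[OF ul t] by (rule LIMSEQ_Suc)
    ultimately have "xl t = x0 + J" using LIMSEQ_unique by blast
    then show ?thesis using J by (simp add: integral_unique)
  qed
  define y where "y t = x0 + integral {a..t} (\<lambda>s. f s (xl s))" for t
  show ?thesis
  proof (intro exI conjI ballI)
    show "y a = x0" by (simp add: y_def)
    fix t assume t: "t \<in> {a..b}"
    have "(y has_vector_derivative f t (xl t)) (at t within {a..b})"
      unfolding y_def
      using has_vector_derivative_add[OF has_vector_derivative_const integral_has_vector_derivative[OF contf[OF contxl] t], of x0]
      by simp
    moreover have "xl t = y t" using xleq[OF t] by (simp add: y_def)
    ultimately show "(y has_vector_derivative f t (y t)) (at t within {a..b})" by simp
  qed
qed



lemma norm_mv_le:
  fixes A :: "real^'n^'m"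
  shows "norm (A *v x) \<le> (\<Sum>i\<in>UNIV. \<Sum>j\<in>UNIV. \<bar>A $ i $ j\<bar>) * norm x"
proof -
  have "norm (A *v x) \<le> (\<Sum>i\<in>UNIV. \<bar>(A *v x) $ i\<bar>)"
    by (rule norm_le_l1_cart)
  also have "\<dots> \<le> (\<Sum>i\<in>UNIV. \<Sum>j\<in>UNIV. \<bar>A $ i $ j\<bar> * norm x)"
  proof (rule sum_mono)
    fix i
    have "\<bar>(A *v x) $ i\<bar> \<le> \<bar>\<Sum>j\<in>UNIV. A $ i $ j * x $ j\<bar>"
      by (simp add: matrix_vector_mult_def)
    also have "\<dots> \<le> (\<Sum>j\<in>UNIV. \<bar>A $ i $ j * x $ j\<bar>)"
      by (rule sum_abs)
    also have "\<dots> \<le> (\<Sum>j\<in>UNIV. \<bar>A $ i $ j\<bar> * norm x)"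
      by (rule sum_mono) (simp add: abs_mult component_le_norm_cart mult_left_mono)
    finally show "\<bar>(A *v x) $ i\<bar> \<le> (\<Sum>j\<in>UNIV. \<bar>A $ i $ j\<bar> * norm x)" .
  qed
  finally show ?thesis by (simp add: sum_distrib_right)
qed

lemma linear_ode_fwd:
  fixes M :: "real \<Rightarrow> real^'n^'n" and c :: "real \<Rightarrow> real^'n"
  assumes ab: "a \<le> b" and cM: "\<And>i j. continuous_on {a..b} (\<lambda>t. M t $ i $ j)"
    and cc: "continuous_on {a..b} c"
  shows "\<exists>x. x a = x0 \<and> (\<forall>t\<in>{a..b}. (x has_vector_derivative (M t *v x t + c t)) (at t within {a..b}))"
proof -
  have "\<forall>i j. \<exists>B. \<forall>t\<in>{a..b}. \<bar>M t $ i $ j\<bar> \<le> B"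
  proof (intro allI)
    fix i j
    have "compact ((\<lambda>t. M t $ i $ j) ` {a..b})" by (rule compact_continuous_image[OF cM]) simp
    then have "bounded ((\<lambda>t. M t $ i $ j) ` {a..b})" by (rule compact_imp_bounded)
    then show "\<exists>B. \<forall>t\<in>{a..b}. \<bar>M t $ i $ j\<bar> \<le> B" by (auto simp: bounded_real)
  qed
  then obtain B where B: "\<And>i j t. t \<in> {a..b} \<Longrightarrow> \<bar>M t $ i $ j\<bar> \<le> B i j" by metis
  define K where "K = 1 + (\<Sum>i\<in>UNIV. \<Sum>j\<in>UNIV. \<bar>B i j\<bar>)"
  have K0: "K > 0" unfolding K_def by (simp add: add_pos_nonneg sum_nonneg)
  have lip: "norm ((M t *v x + c t) - (M t *v y + c t)) \<le> K * norm (x - y)" if t: "t \<in> {a..b}" for t x y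
  proof -
    have "norm ((M t *v x + c t) - (M t *v y + c t)) = norm (M t *v (x - y))"
      by (simp add: matrix_vector_mult_diff_distrib)
    also have "\<dots> \<le> (\<Sum>i\<in>UNIV. \<Sum>j\<in>UNIV. \<bar>M t $ i $ j\<bar>) * norm (x - y)" by (rule norm_mv_le)
    also have "\<dots> \<le> K * norm (x - y)"
    proof (rule mult_right_mono)
      have "(\<Sum>i\<in>UNIV. \<Sum>j\<in>UNIV. \<bar>M t $ i $ j\<bar>) \<le> (\<Sum>i\<in>UNIV. \<Sum>j\<in>UNIV. \<bar>B i j\<bar>)"
        by (intro sum_mono) (meson B[OF t] abs_ge_self order_trans)
      then show "(\<Sum>i\<in>UNIV. \<Sum>j\<in>UNIV. \<bar>M t $ i $ j\<bar>) \<le> K" unfolding K_def by simp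
    qed simp
    finally show ?thesis .
  qed
  have contf: "continuous_on {a..b} (\<lambda>t. M t *v g t + c t)" if g: "continuous_on {a..b} g" for g
    unfolding matrix_vector_mult_def by (intro continuous_intros cM cc g)
  show ?thesis by (rule picard_exists[OF ab contf lip K0])
qed

lemma linear_ode_bwd:
  fixes M :: "real \<Rightarrow> real^'n^'n" and c :: "real \<Rightarrow> real^'n"
  assumes ab: "a \<le> b" and cM: "\<And>i j. continuous_on {a..b} (\<lambda>t. M t $ i $ j)"
    and cc: "continuous_on {a..b} c"
  shows "\<exists>x. x b = x1 \<and> (\<forall>t\<in>{a..b}. (x has_vector_derivative (M t *v x t + c t)) (at t within {a..b}))"
proof -
  define r where "r s = a + b - s" for s :: real
  have rimg: "r ` {a..b} = {a..b}"
  proof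
    show "r ` {a..b} \<subseteq> {a..b}" by (auto simp: r_def)
    show "{a..b} \<subseteq> r ` {a..b}"
    proof
      fix y assume "y \<in> {a..b}"
      then show "y \<in> r ` {a..b}" by (intro image_eqI[of _ _ "a + b - y"]) (auto simp: r_def)
    qed
  qed
  have cr: "continuous_on {a..b} r" unfolding r_def by (intro continuous_intros)
  define N where "N s = - M (r s)" for s
  define d where "d s = - c (r s)" for s
  have cN: "continuous_on {a..b} (\<lambda>t. N t $ i $ j)" for i j
  proof -
    have "continuous_on {a..b} (\<lambda>t. M (r t) $ i $ j)"
      by (rule continuous_on_compose2[OF cM[of i j] cr]) (use rimg in auto)
    then show ?thesis unfolding N_def by (simp add: continuous_on_minus)
  qed
  have cd: "continuous_on {a..b} d"
  proof -
    have "continuous_on {a..b} (\<lambda>t. c (r t))"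
      by (rule continuous_on_compose2[OF cc cr]) (use rimg in auto)
    then show ?thesis unfolding d_def by (intro continuous_intros)
  qed
  obtain x where x0: "x a = x1" and xd: "\<And>t. t \<in> {a..b} \<Longrightarrow> (x has_vector_derivative (N t *v x t + d t)) (at t within {a..b})"
    using linear_ode_fwd[OF ab cN cd] by blast
  show ?thesis
  proof (intro exI conjI ballI)
    show "(x \<circ> r) b = x1" using x0 by (simp add: r_def)
    fix t assume t: "t \<in> {a..b}"
    have rd: "(r has_vector_derivative -1) (at t within {a..b})"
      unfolding r_def by (auto intro!: derivative_eq_intros)
    have rt: "r t \<in> {a..b}" using t by (auto simp: r_def)
    have "((x \<circ> r) has_vector_derivative (-1) *\<^sub>R (N (r t) *v x (r t) + d (r t))) (at t within {a..b})"
      by (rule vector_diff_chain_within[OF rd]) (use xd[OF rt] rimg in simp)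
    moreover have "r (r t) = t" by (simp add: r_def)
    then have "(-1) *\<^sub>R (N (r t) *v x (r t) + d (r t)) = M t *v (x \<circ> r) t + c t"
      by (simp add: N_def d_def matrix_vector_mult_def vec_eq_iff sum_negf)
    ultimately show "((x \<circ> r) has_vector_derivative (M t *v (x \<circ> r) t + c t)) (at t within {a..b})"
      by simp
  qed
qed



lemma graph_subspace:
  fixes Y :: "('a::euclidean_space \<times> real) set"
  assumes sY: "subspace Y" and h: "\<And>j. (0, j) \<in> Y \<Longrightarrow> j = 0"
  shows "\<exists>c. \<forall>v j. (v, j) \<in> Y \<longrightarrow> j = c \<bullet> v"
proof -
  obtain y z where y: "y \<in> span Y" and orth: "\<And>w. w \<in> span Y \<Longrightarrow> orthogonal z w"
    and dec: "(0::'a, 1::real) = y + z"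
    using orthogonal_subspace_decomp_exists[of Y "(0::'a, 1::real)"] by blast
  have yY: "y \<in> Y" using y sY by (metis span_eq_iff)
  have zy: "z \<bullet> y = 0" using orth[OF y] by (simp add: orthogonal_def)
  have "z \<bullet> (0, 1) = z \<bullet> y + z \<bullet> z" using dec by (simp add: inner_add_right)
  then have zz: "snd z = z \<bullet> z" using zy by (simp add: inner_Pair_0 inner_commute)
  have sz: "snd z \<noteq> 0"
  proof
    assume "snd z = 0"
    then have "z = 0" using zz by simp
    then have "(0, 1) \<in> Y" using dec yY by simp
    then show False using h by fastforce
  qed
  show ?thesis
  proof (intro exI allI impI)
    fix v j assume vj: "(v, j) \<in> Y"
    have "z \<bullet> (v, j) = 0" using orth[of "(v,j)"] vj span_base by (force simp: orthogonal_def)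
    then have "fst z \<bullet> v + snd z * j = 0" by (cases z) simp
    then show "j = (- (1 / snd z) *\<^sub>R fst z) \<bullet> v" using sz by (simp add: field_simps)
  qed
qed

lemma Cinf_cont: "Cinf_on U g \<Longrightarrow> continuous_on U g"
  unfolding Cinf_on_def by blast

lemma Cinf_diff: "Cinf_on U g \<Longrightarrow> x \<in> U \<Longrightarrow> g differentiable (at x)"
  unfolding Cinf_on_def by blast

lemma Cinf_deriv: "Cinf_on U g \<Longrightarrow> e \<in> Basis \<Longrightarrow> Cinf_on U (\<lambda>x. frechet_derivative g (at x) e)"
  unfolding Cinf_on_def by blast

lemma basis_q: "((0::real), (axis k (1::real) :: real^'n::finite), (0::real^'r::finite)) \<in> Basis"
  by (force simp: Basis_prod_def)

lemma basis_z: "((0::real), (0 :: real^'n::finite), (axis k (1::real) :: real^'r::finite)) \<in> Basis"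
  by (force simp: Basis_prod_def)

lemma lin_expand_basis:
  fixes h :: "'a::euclidean_space \<Rightarrow> real"
  assumes "linear h"
  shows "h v = (\<Sum>e\<in>Basis. (v \<bullet> e) * h e)"
proof -
  have "h v = h (\<Sum>e\<in>Basis. (v \<bullet> e) *\<^sub>R e)" by (simp add: euclidean_representation)
  also have "\<dots> = (\<Sum>e\<in>Basis. (v \<bullet> e) * h e)"
    using assms by (simp add: linear_sum linear_scale)
  finally show ?thesis .
qed

lemma lin_expand_vec:
  fixes h :: "real^'n \<Rightarrow> real"
  assumes "linear h"
  shows "h X = (\<Sum>k\<in>UNIV. X $ k * h (axis k 1))"
proof -
  have "h X = h (\<Sum>k\<in>UNIV. X $ k *\<^sub>R axis k 1)"
    using basis_expansion[of X] by (simp add: scalar_mult_eq_scaleR)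
  also have "\<dots> = (\<Sum>k\<in>UNIV. X $ k * h (axis k 1))"
    using assms by (simp add: linear_sum linear_scale)
  finally show ?thesis .
qed

lemma fd_expand:
  fixes g :: "real \<times> (real^'n::finite) \<times> (real^'r::finite) \<Rightarrow> real"
  assumes "g differentiable (at w)"
  shows "frechet_derivative g (at w) (0, X, G) = (\<Sum>k\<in>UNIV. X $ k * pdq g w k) + (\<Sum>A\<in>UNIV. G $ A * pdz g w A)"
proof -
  define \<phi> where "\<phi> = frechet_derivative g (at w)"
  have l: "linear \<phi>" unfolding \<phi>_def by (rule linear_frechet_derivative[OF assms])
  have l1: "linear (\<lambda>x. \<phi> (0, x, 0))"
  proof (rule linearI)
    show "\<phi> (0, x + y, 0) = \<phi> (0, x, 0) + \<phi> (0, y, 0)" for x y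
      using linear_add[OF l, of "(0,x,0)" "(0,y,0)"] by simp
    show "\<phi> (0, c *\<^sub>R x, 0) = c *\<^sub>R \<phi> (0, x, 0)" for c x
      using linear_scale[OF l, of c "(0,x,0)"] by simp
  qed
  have l2: "linear (\<lambda>x. \<phi> (0, 0, x))"
  proof (rule linearI)
    show "\<phi> (0, 0, x + y) = \<phi> (0, 0, x) + \<phi> (0, 0, y)" for x y
      using linear_add[OF l, of "(0,0,x)" "(0,0,y)"] by simp
    show "\<phi> (0, 0, c *\<^sub>R x) = c *\<^sub>R \<phi> (0, 0, x)" for c x
      using linear_scale[OF l, of c "(0,0,x)"] by simp
  qed
  have "\<phi> (0, X, G) = \<phi> (0, X, 0) + \<phi> (0, 0, G)"
    using linear_add[OF l, of "(0, X, 0)" "(0, 0, G)"] by simp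
  also have "\<phi> (0, X, 0) = (\<Sum>k\<in>UNIV. X $ k * pdq g w k)"
    using lin_expand_vec[OF l1, of X] by (simp add: pdq_def \<phi>_def)
  also have "\<phi> (0, 0, G) = (\<Sum>A\<in>UNIV. G $ A * pdz g w A)"
    using lin_expand_vec[OF l2, of G] by (simp add: pdz_def \<phi>_def)
  finally show ?thesis by (simp add: \<phi>_def)
qed

lemma first_variation:
  fixes L :: "real \<times> (real^'n::finite) \<times> (real^'r::finite) \<Rightarrow> real"
  assumes Ld: "\<And>w. w \<in> U \<Longrightarrow> L differentiable (at w)"
    and Lc: "continuous_on U L"
    and Lpc: "\<And>e. e \<in> Basis \<Longrightarrow> continuous_on U (\<lambda>w. frechet_derivative L (at w) e)"
    and dfm: "adm_deformation U \<psi> t0 t1 q z Q Z"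
    and tanQ: "\<And>t. t \<in> {t0..t1} \<Longrightarrow> ((\<lambda>\<xi>. Q \<xi> t) has_vector_derivative X t) (at 0)"
    and tanZ: "\<And>t. t \<in> {t0..t1} \<Longrightarrow> ((\<lambda>\<xi>. Z \<xi> t) has_vector_derivative G t) (at 0)"
  shows "((\<lambda>\<xi>. integral {t0..t1} (\<lambda>t. L (t, Q \<xi> t, Z \<xi> t))) has_real_derivative
           integral {t0..t1} (\<lambda>t. frechet_derivative L (at (t, q t, z t)) (0, X t, G t))) (at 0)"
proof -
  obtain \<epsilon> where \<epsilon>: "\<epsilon> > 0"
    and adm: "\<And>\<xi>. \<xi> \<in> {-\<epsilon><..<\<epsilon>} \<Longrightarrow> admissible_lift U \<psi> t0 t1 (Q \<xi>) (Z \<xi>)"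
    and QZ0: "\<And>t. t \<in> {t0..t1} \<Longrightarrow> Q 0 t = q t \<and> Z 0 t = z t"
    and C1: "C1_family ({-\<epsilon><..<\<epsilon>} \<times> {t0..t1}) (\<lambda>(\<xi>, t). (Q \<xi> t, Z \<xi> t))"
    using dfm unfolding adm_deformation_def by blast
  define E where "E = {-\<epsilon><..<\<epsilon>}"
  define T where "T = {t0..t1}"
  define S where "S = E \<times> T"
  define Fm where "Fm = (\<lambda>(\<xi>::real, t::real). (Q \<xi> t, Z \<xi> t))"
  obtain F' where der: "\<And>w. w \<in> S \<Longrightarrow> (Fm has_derivative F' w) (at w within S)"
    and cF': "\<And>h. continuous_on S (\<lambda>w. F' w h)"
    using C1 unfolding C1_family_def S_def E_def T_def Fm_def by blast
  have E0: "0 \<in> E" and oE: "open E" and cE: "convex E" using \<epsilon> by (auto simp: E_def)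
  have inU: "(t, Q \<xi> t, Z \<xi> t) \<in> U" if "\<xi> \<in> E" "t \<in> T" for \<xi> t
    using adm[of \<xi>] that unfolding admissible_lift_def E_def T_def by blast
  define V where "V \<xi> t = F' (\<xi>, t) (1, 0)" for \<xi> t
  have stepa: "((\<lambda>\<xi>. (Q \<xi> t, Z \<xi> t)) has_vector_derivative V \<xi> t) (at \<xi> within E)"
    if \<xi>: "\<xi> \<in> E" and t: "t \<in> T" for \<xi> t
  proof -
    have d1: "((\<lambda>\<xi>. (\<xi>, t)) has_derivative (\<lambda>h. (h, 0))) (at \<xi> within E)"
      by (auto intro!: derivative_eq_intros)
    have d2: "(Fm has_derivative F' (\<xi>, t)) (at (\<xi>, t) within (\<lambda>\<xi>. (\<xi>, t)) ` E)"
      by (rule has_derivative_subset[OF der]) (use \<xi> t in \<open>auto simp: S_def\<close>)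
    have "((Fm \<circ> (\<lambda>\<xi>. (\<xi>, t))) has_derivative (F' (\<xi>, t) \<circ> (\<lambda>h. (h, 0)))) (at \<xi> within E)"
      by (rule diff_chain_within[OF d1 d2])
    moreover have "Fm \<circ> (\<lambda>\<xi>. (\<xi>, t)) = (\<lambda>\<xi>. (Q \<xi> t, Z \<xi> t))" by (auto simp: Fm_def)
    moreover have "F' (\<xi>, t) \<circ> (\<lambda>h. (h, 0)) = (\<lambda>h. h *\<^sub>R V \<xi> t)"
    proof
      fix h :: real
      have "linear (F' (\<xi>, t))" using der[of "(\<xi>, t)"] \<xi> t by (auto simp: S_def intro: has_derivative_linear)
      then have "F' (\<xi>, t) (h *\<^sub>R (1, 0)) = h *\<^sub>R F' (\<xi>, t) (1, 0)" by (rule linear_scale)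
      then show "(F' (\<xi>, t) \<circ> (\<lambda>h. (h, 0))) h = h *\<^sub>R V \<xi> t" by (simp add: V_def)
    qed
    ultimately show ?thesis by (simp add: has_vector_derivative_def)
  qed
  define D where "D \<xi> t = frechet_derivative L (at (t, Q \<xi> t, Z \<xi> t)) (0, V \<xi> t)" for \<xi> t
  have stepb: "((\<lambda>\<xi>. L (t, Q \<xi> t, Z \<xi> t)) has_vector_derivative D \<xi> t) (at \<xi> within E)"
    if \<xi>: "\<xi> \<in> E" and t: "t \<in> T" for \<xi> t
  proof -
    have i1: "((\<lambda>\<xi>. (t, Q \<xi> t, Z \<xi> t)) has_derivative (\<lambda>h. (0, h *\<^sub>R V \<xi> t))) (at \<xi> within E)"
      using has_derivative_Pair[OF has_derivative_const stepa[OF \<xi> t, unfolded has_vector_derivative_def], of t]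
      by simp
    have Lw: "(L has_derivative frechet_derivative L (at (t, Q \<xi> t, Z \<xi> t))) (at (t, Q \<xi> t, Z \<xi> t))"
      using Ld[OF inU[OF \<xi> t]] by (simp add: frechet_derivative_works)
    have "((L \<circ> (\<lambda>\<xi>. (t, Q \<xi> t, Z \<xi> t))) has_derivative
            (frechet_derivative L (at (t, Q \<xi> t, Z \<xi> t)) \<circ> (\<lambda>h. (0, h *\<^sub>R V \<xi> t)))) (at \<xi> within E)"
      by (rule diff_chain_within[OF i1 has_derivative_at_withinI[OF Lw]])
    moreover have "frechet_derivative L (at (t, Q \<xi> t, Z \<xi> t)) \<circ> (\<lambda>h. (0, h *\<^sub>R V \<xi> t)) = (\<lambda>h. h *\<^sub>R D \<xi> t)"
    proof
      fix h :: real
      have "linear (frechet_derivative L (at (t, Q \<xi> t, Z \<xi> t)))"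
        by (rule linear_frechet_derivative[OF Ld[OF inU[OF \<xi> t]]])
      then have "frechet_derivative L (at (t, Q \<xi> t, Z \<xi> t)) (h *\<^sub>R (0, V \<xi> t)) = h *\<^sub>R D \<xi> t"
        unfolding D_def by (rule linear_scale)
      then show "(frechet_derivative L (at (t, Q \<xi> t, Z \<xi> t)) \<circ> (\<lambda>h. (0, h *\<^sub>R V \<xi> t))) h = h *\<^sub>R D \<xi> t"
        by simp
    qed
    ultimately show ?thesis by (simp add: has_vector_derivative_def o_def)
  qed
  have cFm: "continuous_on S Fm" by (rule has_derivative_continuous_on[OF der])
  have cP: "continuous_on S (\<lambda>p. (snd p, Fm p))" by (intro continuous_intros cFm)
  have PU: "(\<lambda>p. (snd p, Fm p)) ` S \<subseteq> U"
    using inU by (auto simp: S_def Fm_def)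
  have cD: "continuous_on S (\<lambda>p. D (fst p) (snd p))"
  proof -
    have eq: "D (fst p) (snd p) = (\<Sum>e\<in>Basis. ((0, F' p (1, 0)) \<bullet> e) * frechet_derivative L (at (snd p, Fm p)) e)"
      if p: "p \<in> S" for p
    proof -
      obtain \<xi> t where pe: "p = (\<xi>, t)" by (cases p)
      have "linear (frechet_derivative L (at (snd p, Fm p)))"
        using Ld inU p by (auto simp: pe S_def Fm_def intro!: linear_frechet_derivative)
      note le = lin_expand_basis[OF this, of "(0, F' p (1, 0))"]
      have "D (fst p) (snd p) = frechet_derivative L (at (snd p, Fm p)) (0, F' p (1, 0))"
        unfolding pe D_def V_def Fm_def by simp
      from this le show ?thesis by (rule trans)
    qed
    have "continuous_on S (\<lambda>p. (\<Sum>e\<in>Basis. ((0, F' p (1, 0)) \<bullet> e) * frechet_derivative L (at (snd p, Fm p)) e))"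
    proof (intro continuous_on_sum continuous_on_mult ballI)
      fix e :: "real \<times> (real^'n) \<times> (real^'r)" assume e: "e \<in> Basis"
      show "continuous_on S (\<lambda>p. (0, F' p (1, 0)) \<bullet> e)" by (intro continuous_intros cF')
      show "continuous_on S (\<lambda>p. frechet_derivative L (at (snd p, Fm p)) e)"
        by (rule continuous_on_compose2[OF Lpc[OF e] cP PU])
    qed
    then show ?thesis using eq continuous_on_cong by (smt (verit))
  qed
  have cD': "continuous_on (E \<times> cbox t0 t1) (\<lambda>(\<xi>, t). D \<xi> t)"
    using cD by (simp add: S_def T_def case_prod_beta')
  have intf: "(\<lambda>t. L (t, Q \<xi> t, Z \<xi> t)) integrable_on cbox t0 t1" if \<xi>: "\<xi> \<in> E" for \<xi>
  proof -
    have "continuous_on T (\<lambda>t. (snd (\<xi>, t), Fm (\<xi>, t)))"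
      by (rule continuous_on_compose2[OF cP, of _ "\<lambda>t. (\<xi>, t)"]) (use \<xi> in \<open>auto simp: S_def intro!: continuous_intros\<close>)
    then have "continuous_on T (\<lambda>t. L (t, Q \<xi> t, Z \<xi> t))"
      using continuous_on_compose2[OF Lc, of T "\<lambda>t. (snd (\<xi>, t), Fm (\<xi>, t))"] inU[OF \<xi>]
      by (auto simp: Fm_def)
    then show ?thesis by (simp add: T_def integrable_continuous_real)
  qed
  have lb: "((\<lambda>\<xi>. integral (cbox t0 t1) (\<lambda>t. L (t, Q \<xi> t, Z \<xi> t))) has_vector_derivative
             integral (cbox t0 t1) (D 0)) (at 0 within E)"
    by (rule leibniz_rule_vector_derivative[OF _ intf cD' E0 cE]) (auto intro!: stepb simp: T_def)
  have D0: "D 0 t = frechet_derivative L (at (t, q t, z t)) (0, X t, G t)" if t: "t \<in> T" for t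
  proof -
    have "((\<lambda>\<xi>. (Q \<xi> t, Z \<xi> t)) has_vector_derivative V 0 t) (at 0)"
      using stepa[OF E0 t] at_within_open[OF E0 oE] by simp
    moreover have "((\<lambda>\<xi>. (Q \<xi> t, Z \<xi> t)) has_vector_derivative (X t, G t)) (at 0)"
      using t by (intro has_vector_derivative_Pair tanQ tanZ) (auto simp: T_def)
    ultimately have "V 0 t = (X t, G t)" by (rule vector_derivative_unique_at)
    then show ?thesis using QZ0[of t] t by (simp add: D_def T_def)
  qed
  have "integral (cbox t0 t1) (D 0) = integral {t0..t1} (\<lambda>t. frechet_derivative L (at (t, q t, z t)) (0, X t, G t))"
    unfolding cbox_interval by (rule integral_cong) (use D0 in \<open>auto simp: T_def\<close>)
  then show ?thesis
    using lb at_within_open[OF E0 oE]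
    by (simp add: has_real_derivative_iff_has_vector_derivative)
qed



lemma vec_nth_differentiable: "f differentiable F \<Longrightarrow> (\<lambda>t. f t $ i) differentiable F"
  unfolding differentiable_def
  using bounded_linear.has_derivative[OF bounded_linear_vec_nth[of i]] by blast

lemma vec_differentiable:
  fixes f :: "real \<Rightarrow> real^'n"
  assumes "\<And>i. (\<lambda>t. f t $ i) differentiable (at x within S)"
  shows "f differentiable (at x within S)"
proof -
  have "(\<lambda>t. \<Sum>i\<in>UNIV. (f t $ i) *\<^sub>R (axis i 1 :: real^'n)) differentiable (at x within S)"
    using assms by (intro differentiable_sum) auto
  moreover have "(\<lambda>t. \<Sum>i\<in>UNIV. (f t $ i) *\<^sub>R (axis i 1 :: real^'n)) = f"
  proof
    fix x
    have "(\<Sum>i\<in>UNIV. f x $ i *s (axis i 1 :: real^'n)) = f x" by (rule basis_expansion)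
    then show "(\<Sum>i\<in>UNIV. (f x $ i) *\<^sub>R (axis i 1 :: real^'n)) = f x" by (simp add: scalar_mult_eq_scaleR)
  qed
  ultimately show ?thesis by simp
qed

lemma curve_cont:
  assumes g: "Cinf_on U g" and e: "e \<in> Basis" and cw: "continuous_on T w" and wU: "w ` T \<subseteq> U"
  shows "continuous_on T (\<lambda>t. frechet_derivative g (at (w t)) e)"
  by (rule continuous_on_compose2[OF Cinf_cont[OF Cinf_deriv[OF g e]] cw wU])

lemma curve_diff:
  assumes g: "Cinf_on U g" and e: "e \<in> Basis" and wd: "w differentiable (at t within T)" and wU: "w t \<in> U"
  shows "(\<lambda>t. frechet_derivative g (at (w t)) e) differentiable (at t within T)"
proof -
  have "(\<lambda>x. frechet_derivative g (at x) e) differentiable (at (w t) within w ` T)"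
    by (rule differentiable_at_withinI[OF Cinf_diff[OF Cinf_deriv[OF g e] wU]])
  from differentiable_chain_within[OF wd this] show ?thesis by (simp add: o_def)
qed

theorem theorem2p1:
  fixes U :: "(real \<times> (real^'n::finite) \<times> (real^'r::finite)) set"
    and \<psi> :: "real \<times> (real^'n::finite) \<times> (real^'r::finite) \<Rightarrow> real^'n"
    and L :: "real \<times> (real^'n::finite) \<times> (real^'r::finite) \<Rightarrow> real"
    and q :: "real \<Rightarrow> real^'n" and z :: "real \<Rightarrow> real^'r"
    and t0 t1 :: real
  assumes "open U"
    and psi_smooth: "\<forall>i. Cinf_on U (\<lambda>w. \<psi> w $ i)"
    and L_smooth: "Cinf_on U L"
    and rank: "\<forall>w\<in>U. rank (\<chi> i A. pdz (\<lambda>v. \<psi> v $ i) w A) = CARD('r)"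
    and "t0 < t1"
    and adm: "admissible_lift U \<psi> t0 t1 q z"
    and ord: "ordinary U \<psi> t0 t1 q z"
    and ext: "extremal U \<psi> L t0 t1 q z"
  shows "\<exists>p p' :: real \<Rightarrow> real^'n. \<forall>t\<in>{t0..t1}.
           (p has_vector_derivative p' t) (at t within {t0..t1}) \<and>
           (\<forall>i. p' t $ i + (\<Sum>k\<in>UNIV. p t $ k * pdq (\<lambda>w. \<psi> w $ k) (t, q t, z t) i)
                  = pdq L (t, q t, z t) i) \<and>
           (\<forall>A. (\<Sum>k\<in>UNIV. p t $ k * pdz (\<lambda>w. \<psi> w $ k) (t, q t, z t) A)
                  = pdz L (t, q t, z t) A)"
proof -
  note t01 = \<open>t0 < t1\<close>
  define T where "T = {t0..t1}"
  define w where "w t = (t, q t, z t)" for t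
  have wU: "w t \<in> U" if "t \<in> T" for t using adm that unfolding admissible_lift_def w_def T_def by blast
  have qd: "(q has_vector_derivative \<psi> (w t)) (at t within T)" if "t \<in> T" for t
    using adm that unfolding admissible_lift_def w_def T_def by blast
  have zd: "z differentiable (at t within T)" if "t \<in> T" for t
    using adm that unfolding admissible_lift_def w_def T_def by blast
  have wd: "w differentiable (at t within T)" if t: "t \<in> T" for t
    unfolding w_def using differentiableI_vector[OF qd[OF t]] zd[OF t]
    by (intro differentiable_Pair) (auto intro: differentiable_ident)
  have cw: "continuous_on T w"
    using wd by (auto simp: continuous_on_eq_continuous_within intro: differentiable_imp_continuous_within)
  have wTU: "w ` T \<subseteq> U" using wU by blast
  define Am where "Am t = (\<chi> i k. pdq (\<lambda>v. \<psi> v $ i) (w t) k)" for t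
  define Bm where "Bm t = (\<chi> i A. pdz (\<lambda>v. \<psi> v $ i) (w t) A)" for t
  define lq where "lq t = (\<chi> k. pdq L (w t) k)" for t
  define lz where "lz t = (\<chi> A. pdz L (w t) A)" for t
  have cAm: "continuous_on T (\<lambda>t. Am t $ i $ k)" for i k
    unfolding Am_def pdq_def using curve_cont[OF psi_smooth[rule_format, of i] basis_q cw wTU] by simp
  have cBm: "continuous_on T (\<lambda>t. Bm t $ i $ k)" for i k
    unfolding Bm_def pdz_def using curve_cont[OF psi_smooth[rule_format, of i] basis_z cw wTU] by simp
  have clq: "continuous_on T lq"
    unfolding lq_def pdq_def by (intro continuous_on_vec_lambda curve_cont[OF L_smooth basis_q cw wTU])
  have clz: "continuous_on T lz"
    unfolding lz_def pdz_def by (intro continuous_on_vec_lambda curve_cont[OF L_smooth basis_z cw wTU])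
  have vec_eq: "(\<chi> i. (\<Sum>k\<in>UNIV. pdq (\<lambda>w. \<psi> w $ i) (t, q t, z t) k * X t $ k) +
                 (\<Sum>A\<in>UNIV. pdz (\<lambda>w. \<psi> w $ i) (t, q t, z t) A * G t $ A)) = Am t *v X t + Bm t *v G t"
    for t and X :: "real \<Rightarrow> real^'n" and G :: "real \<Rightarrow> real^'r"
    by (simp add: vec_eq_iff matrix_vector_mult_def Am_def Bm_def w_def)
  have adm_iff: "adm_inf_deformation \<psi> t0 t1 q z X G \<longleftrightarrow>
      (\<forall>t\<in>T. (X has_vector_derivative (Am t *v X t + Bm t *v G t)) (at t within T) \<and> G differentiable (at t within T))"
    for X G unfolding adm_inf_deformation_def vec_eq T_def ..
  define J where "J X G = integral T (\<lambda>t. lq t \<bullet> X t + lz t \<bullet> G t)" for X G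
  define W where "W = {(X, G). X t0 = 0 \<and> adm_inf_deformation \<psi> t0 t1 q z X G}"
  have Wcont: "continuous_on T X \<and> continuous_on T G" if "(X, G) \<in> W" for X G
  proof -
    have h: "\<forall>t\<in>T. (X has_vector_derivative (Am t *v X t + Bm t *v G t)) (at t within T) \<and> G differentiable (at t within T)"
      using that adm_iff unfolding W_def by blast
    then show ?thesis
      by (auto simp: continuous_on_eq_continuous_within intro: differentiable_imp_continuous_within
          has_vector_derivative_continuous)
  qed
  have Jint: "(\<lambda>t. lq t \<bullet> X t + lz t \<bullet> G t) integrable_on T" if "(X, G) \<in> W" for X G
    using Wcont[OF that] clq clz unfolding T_def
    by (intro integrable_continuous_real continuous_intros) auto
  have key1: "J X G = 0" if XG: "(X, G) \<in> W" and X1: "X t1 = 0" for X G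
  proof -
    have ai: "adm_inf_deformation \<psi> t0 t1 q z X G" and X0: "X t0 = 0" using XG unfolding W_def by auto
    obtain Q Z where dfm: "adm_deformation U \<psi> t0 t1 q z Q Z"
      and tan: "\<And>t. t \<in> {t0..t1} \<Longrightarrow> ((\<lambda>\<xi>. Q \<xi> t) has_vector_derivative X t) (at 0) \<and>
                          ((\<lambda>\<xi>. Z \<xi> t) has_vector_derivative G t) (at 0)"
      using ord ai X0 X1 unfolding ordinary_def by blast
    have d1: "((\<lambda>\<xi>. integral {t0..t1} (\<lambda>t. L (t, Q \<xi> t, Z \<xi> t))) has_real_derivative
           integral {t0..t1} (\<lambda>t. frechet_derivative L (at (t, q t, z t)) (0, X t, G t))) (at 0)"
    proof (rule first_variation[OF _ Cinf_cont[OF L_smooth] _ dfm])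
      show "\<And>w. w \<in> U \<Longrightarrow> L differentiable (at w)" by (rule Cinf_diff[OF L_smooth])
      show "\<And>e. e \<in> Basis \<Longrightarrow> continuous_on U (\<lambda>w. frechet_derivative L (at w) e)"
        by (rule Cinf_cont[OF Cinf_deriv[OF L_smooth]])
    qed (use tan in auto)
    have d2: "((\<lambda>\<xi>. integral {t0..t1} (\<lambda>t. L (t, Q \<xi> t, Z \<xi> t))) has_real_derivative 0) (at 0)"
      using ext dfm unfolding extremal_def by blast
    have z: "integral {t0..t1} (\<lambda>t. frechet_derivative L (at (t, q t, z t)) (0, X t, G t)) = 0"
      using DERIV_unique[OF d1 d2] .
    have "J X G = integral {t0..t1} (\<lambda>t. frechet_derivative L (at (t, q t, z t)) (0, X t, G t))"
      unfolding J_def T_def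
    proof (rule integral_cong)
      fix t assume t: "t \<in> {t0..t1}"
      have "frechet_derivative L (at (t, q t, z t)) (0, X t, G t) =
          (\<Sum>k\<in>UNIV. X t $ k * pdq L (w t) k) + (\<Sum>A\<in>UNIV. G t $ A * pdz L (w t) A)"
        using fd_expand[OF Cinf_diff[OF L_smooth wU], of t "X t" "G t"] t by (simp add: w_def T_def)
      then show "lq t \<bullet> X t + lz t \<bullet> G t = frechet_derivative L (at (t, q t, z t)) (0, X t, G t)"
        by (simp add: lq_def lz_def inner_vec_def mult.commute)
    qed
    then show ?thesis using z by simp
  qed
  define Y where "Y = {(X t1, J X G) | X G. (X, G) \<in> W}"
  have Jadd: "J (\<lambda>t. X1 t + X2 t) (\<lambda>t. G1 t + G2 t) = J X1 G1 + J X2 G2"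
    if "(X1, G1) \<in> W" "(X2, G2) \<in> W" for X1 G1 X2 G2
  proof -
    have "J (\<lambda>t. X1 t + X2 t) (\<lambda>t. G1 t + G2 t) = integral T (\<lambda>t. (lq t \<bullet> X1 t + lz t \<bullet> G1 t) + (lq t \<bullet> X2 t + lz t \<bullet> G2 t))"
      unfolding J_def by (simp add: inner_add_right algebra_simps)
    also have "\<dots> = J X1 G1 + J X2 G2" unfolding J_def
      by (rule integral_add[OF Jint[OF that(1)] Jint[OF that(2)]])
    finally show ?thesis .
  qed
  have Jscale: "J (\<lambda>t. c *\<^sub>R X t) (\<lambda>t. c *\<^sub>R G t) = c * J X G" if "(X, G) \<in> W" for X G c
  proof -
    have "J (\<lambda>t. c *\<^sub>R X t) (\<lambda>t. c *\<^sub>R G t) = integral T (\<lambda>t. c * (lq t \<bullet> X t + lz t \<bullet> G t))"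
      unfolding J_def by (simp add: algebra_simps)
    also have "\<dots> = c * J X G" unfolding J_def by simp
    finally show ?thesis .
  qed
  have Wadd: "((\<lambda>t. X1 t + X2 t), (\<lambda>t. G1 t + G2 t)) \<in> W"
    if "(X1, G1) \<in> W" "(X2, G2) \<in> W" for X1 G1 X2 G2
  proof -
    have h1: "(X1 has_vector_derivative (Am t *v X1 t + Bm t *v G1 t)) (at t within T) \<and> G1 differentiable (at t within T)"
      and h2: "(X2 has_vector_derivative (Am t *v X2 t + Bm t *v G2 t)) (at t within T) \<and> G2 differentiable (at t within T)"
      if "t \<in> T" for t using that \<open>(X1, G1) \<in> W\<close> \<open>(X2, G2) \<in> W\<close> unfolding W_def adm_iff by blast+
    have "((\<lambda>t. X1 t + X2 t) has_vector_derivative (Am t *v (X1 t + X2 t) + Bm t *v (G1 t + G2 t))) (at t within T)"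
      if "t \<in> T" for t
      by (rule has_vector_derivative_eq_rhs[OF has_vector_derivative_add[OF conjunct1[OF h1[OF that]] conjunct1[OF h2[OF that]]]])
        (simp add: matrix_vector_right_distrib algebra_simps)
    moreover have "(\<lambda>t. G1 t + G2 t) differentiable (at t within T)" if "t \<in> T" for t
      using h1[OF that] h2[OF that] by (intro differentiable_add) auto
    ultimately show ?thesis using that unfolding W_def adm_iff by auto
  qed
  have Wscale: "((\<lambda>t. c *\<^sub>R X t), (\<lambda>t. c *\<^sub>R G t)) \<in> W" if "(X, G) \<in> W" for X G c
  proof -
    have "(X has_vector_derivative (Am t *v X t + Bm t *v G t)) (at t within T) \<and> G differentiable (at t within T)"
      if "t \<in> T" for t using \<open>(X, G) \<in> W\<close> that unfolding W_def adm_iff by blast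
    then show ?thesis using \<open>(X, G) \<in> W\<close> unfolding W_def adm_iff
      by (auto intro!: has_vector_derivative_eq_rhs[OF has_vector_derivative_scaleR[OF DERIV_const]]
          differentiable_scaleR simp: matrix_vector_mult_scaleR algebra_simps)
  qed
  have W0: "((\<lambda>t. 0), (\<lambda>t. 0)) \<in> W" unfolding W_def adm_iff by auto
  have sY: "subspace Y"
    unfolding subspace_def
  proof (intro conjI ballI allI)
    have "J (\<lambda>t. 0) (\<lambda>t. 0) = 0" by (simp add: J_def)
    then show "0 \<in> Y" using W0 unfolding Y_def by (auto simp: zero_prod_def)
  next
    fix a b assume "a \<in> Y" "b \<in> Y"
    then obtain X1 G1 X2 G2 where "(X1, G1) \<in> W" "(X2, G2) \<in> W" "a = (X1 t1, J X1 G1)" "b = (X2 t1, J X2 G2)"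
      unfolding Y_def by blast
    then show "a + b \<in> Y" unfolding Y_def using Wadd Jadd
      by (auto intro!: exI[of _ "\<lambda>t. X1 t + X2 t"] exI[of _ "\<lambda>t. G1 t + G2 t"])
  next
    fix c :: real and a assume "a \<in> Y"
    then obtain X G where "(X, G) \<in> W" "a = (X t1, J X G)" unfolding Y_def by blast
    then show "c *\<^sub>R a \<in> Y" unfolding Y_def using Wscale Jscale
      by (auto intro!: exI[of _ "\<lambda>t. c *\<^sub>R X t"] exI[of _ "\<lambda>t. c *\<^sub>R G t"])
  qed
  have Y0: "j = 0" if "(0, j) \<in> Y" for j
    using that key1 unfolding Y_def by auto
  obtain c0 where c0: "\<And>X G. (X, G) \<in> W \<Longrightarrow> J X G = c0 \<bullet> X t1"
    using graph_subspace[OF sY Y0] unfolding Y_def by blast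
  have T01: "t0 \<le> t1" using t01 by simp
  have cMp: "continuous_on T (\<lambda>t. (- transpose (Am t)) $ i $ k)" for i k
    using cAm[of k i] by (simp add: transpose_def continuous_on_minus)
  obtain p where pT: "p t1 = c0"
    and pd: "\<And>t. t \<in> T \<Longrightarrow> (p has_vector_derivative ((- transpose (Am t)) *v p t + lq t)) (at t within T)"
    using linear_ode_bwd[OF T01 cMp[unfolded T_def] clq[unfolded T_def], of c0] unfolding T_def by blast
  have cp: "continuous_on T p"
    using pd by (auto simp: continuous_on_eq_continuous_within intro: has_vector_derivative_continuous)
  define f where "f t = lz t - transpose (Bm t) *v p t" for t
  have cf: "continuous_on T f"
    unfolding f_def matrix_vector_mult_def transpose_def
    by (intro continuous_intros clz cp cBm)
  have df: "f differentiable (at t within T)" if t: "t \<in> T" for t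
  proof (rule vec_differentiable)
    fix A
    have pdk: "(\<lambda>t. p t $ k) differentiable (at t within T)" for k
      by (rule vec_nth_differentiable[OF differentiableI_vector[OF pd[OF t]]])
    have bd: "(\<lambda>t. Bm t $ k $ A) differentiable (at t within T)" for k
      unfolding Bm_def pdz_def using curve_diff[OF psi_smooth[rule_format, of k] basis_z wd[OF t] wU[OF t]] by simp
    have ld: "(\<lambda>t. lz t $ A) differentiable (at t within T)"
      unfolding lz_def pdz_def using curve_diff[OF L_smooth basis_z wd[OF t] wU[OF t]] by simp
    have "(\<lambda>t. lz t $ A - (\<Sum>k\<in>UNIV. Bm t $ k $ A * p t $ k)) differentiable (at t within T)"
      using ld bd pdk by (intro differentiable_diff differentiable_sum differentiable_mult) auto
    then show "(\<lambda>t. f t $ A) differentiable (at t within T)"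
      by (simp add: f_def matrix_vector_mult_def transpose_def)
  qed
  have cBf: "continuous_on T (\<lambda>t. Bm t *v f t)"
    unfolding matrix_vector_mult_def by (intro continuous_intros cBm cf)
  obtain X where X0: "X t0 = 0"
    and Xd: "\<And>t. t \<in> T \<Longrightarrow> (X has_vector_derivative (Am t *v X t + Bm t *v f t)) (at t within T)"
    using linear_ode_fwd[OF T01 cAm[unfolded T_def] cBf[unfolded T_def], of 0] unfolding T_def by blast
  have XW: "(X, f) \<in> W" unfolding W_def adm_iff using X0 Xd df by auto
  have JX: "J X f = c0 \<bullet> X t1" by (rule c0[OF XW])
  define h where "h t = lq t \<bullet> X t + (transpose (Bm t) *v p t) \<bullet> f t" for t
  have pX: "((\<lambda>t. p t \<bullet> X t) has_vector_derivative h t) (at t within T)" if t: "t \<in> T" for t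
  proof -
    have "((\<lambda>t. p t \<bullet> X t) has_vector_derivative
        (p t \<bullet> (Am t *v X t + Bm t *v f t) + ((- transpose (Am t)) *v p t + lq t) \<bullet> X t)) (at t within T)"
      by (rule bounded_bilinear.has_vector_derivative[OF bounded_bilinear_inner pd[OF t] Xd[OF t]])
    moreover have "p t \<bullet> (Am t *v X t + Bm t *v f t) + ((- transpose (Am t)) *v p t + lq t) \<bullet> X t = h t"
    proof -
      have e1: "(transpose (Am t) *v p t) \<bullet> X t = p t \<bullet> (Am t *v X t)"
        by (simp add: dot_lmul_matrix)
      have e2: "(transpose (Bm t) *v p t) \<bullet> f t = p t \<bullet> (Bm t *v f t)"
        by (simp add: dot_lmul_matrix)
      have e3: "((- transpose (Am t)) *v p t) = - (transpose (Am t) *v p t)"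
        by (simp add: vec_eq_iff matrix_vector_mult_def sum_negf)
      show ?thesis unfolding h_def e2 e3 using e1 by (simp add: inner_add_left inner_add_right inner_diff_left)
    qed
    ultimately show ?thesis by simp
  qed
  have hint: "(h has_integral (p t1 \<bullet> X t1 - p t0 \<bullet> X t0)) T"
    unfolding T_def by (rule fundamental_theorem_of_calculus[OF T01]) (use pX in \<open>auto simp: T_def\<close>)
  then have hint': "(h has_integral (c0 \<bullet> X t1)) T" using pT X0 by simp
  have cX: "continuous_on T X" using Wcont[OF XW] by blast
  have ffint: "(\<lambda>t. f t \<bullet> f t) integrable_on T"
    unfolding T_def by (intro integrable_continuous_real continuous_intros cf[unfolded T_def])
  have "J X f = integral T (\<lambda>t. h t + f t \<bullet> f t)"
    unfolding J_def
  proof (rule integral_cong)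
    fix t
    have "lz t = f t + transpose (Bm t) *v p t" by (simp add: f_def)
    then show "lq t \<bullet> X t + lz t \<bullet> f t = h t + f t \<bullet> f t"
      by (simp add: h_def inner_add_left inner_add_right inner_commute)
  qed
  also have "\<dots> = integral T h + integral T (\<lambda>t. f t \<bullet> f t)"
    by (rule integral_add[OF has_integral_integrable[OF hint'] ffint])
  also have "\<dots> = c0 \<bullet> X t1 + integral T (\<lambda>t. f t \<bullet> f t)"
    using hint' by (simp add: integral_unique)
  finally have ff0: "integral T (\<lambda>t. f t \<bullet> f t) = 0" using JX by simp
  have f0: "f t = 0" if t: "t \<in> T" for t
  proof -
    have "f t \<bullet> f t = 0"
    proof (rule has_integral_0_cbox_imp_0[of t0 t1 "\<lambda>t. f t \<bullet> f t" t])
      show "continuous_on (cbox t0 t1) (\<lambda>t. f t \<bullet> f t)"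
        using cf unfolding T_def cbox_interval by (intro continuous_intros)
      show "((\<lambda>t. f t \<bullet> f t) has_integral 0) (cbox t0 t1)"
        using ffint ff0 unfolding T_def cbox_interval by (metis has_integral_integral)
      show "box t0 t1 \<noteq> {}" using t01 by simp
      show "t \<in> cbox t0 t1" using t by (simp add: T_def)
    qed simp
    then show ?thesis by simp
  qed
  show ?thesis
  proof (intro exI ballI conjI allI)
    fix t assume tT: "t \<in> {t0..t1}"
    then have t: "t \<in> T" by (simp add: T_def)
    show "(p has_vector_derivative ((- transpose (Am t)) *v p t + lq t)) (at t within {t0..t1})"
      using pd[OF t] by (simp add: T_def)
    fix i
    show "((- transpose (Am t)) *v p t + lq t) $ i + (\<Sum>k\<in>UNIV. p t $ k * pdq (\<lambda>w. \<psi> w $ k) (t, q t, z t) i)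
          = pdq L (t, q t, z t) i"
      by (simp add: matrix_vector_mult_def transpose_def Am_def lq_def w_def sum_negf mult.commute)
  next
    fix t A assume tT: "t \<in> {t0..t1}"
    then have t: "t \<in> T" by (simp add: T_def)
    have "f t $ A = 0" using f0[OF t] by simp
    then show "(\<Sum>k\<in>UNIV. p t $ k * pdz (\<lambda>w. \<psi> w $ k) (t, q t, z t) A) = pdz L (t, q t, z t) A"
      by (simp add: f_def matrix_vector_mult_def transpose_def Bm_def lz_def w_def mult.commute)
  qed
qed

end
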